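(* Every almost periodic sequence has the universal joint repetition property. That is, if $a:\mathbb{Z}\to\mathbb{C}$ is almost periodic, then for every metric space $\tilde\Omega$ and every sequence $\{\tilde\omega_n\}_{n\ge0}$ in $\tilde\Omega$ with the repetition property, the sequences $\{a(n)\}_{n\ge0}$ (in $\mathbb{C}$) and $\{\tilde\omega_n\}_{n\ge0}$ have the joint repetition property.
   Context: $a:\mathbb{Z}\to\mathbb{C}$ is almost periodic if its set of translates $\{a(\cdot+m):m\in\mathbb{Z}\}$ is relatively compact in $\ell^\infty(\mathbb{Z})$. $\mathbb{Z}_+=\{1,2,\ldots\}$. A sequence $\{\omega_n\}_{n\ge0}$ in a metric space $\Omega$ has the repetition property if for every $\varepsilon>0$ and $r \in \mathbb{Z}_+$ there exists $q \in \mathbb{Z}_+$ such that $\mathrm{dist}(\omega_n,\omega_{n+q}) < \varepsilon$ for $n = 0,1,\ldots, rq$. A family of sequences (possibly in different metric spaces) has the joint repetition property if each of them has the repetition property and, for each finite subfamily and each $\varepsilon>0$, $r\in\mathbb{Z}_+$, a single $q\in\mathbb{Z}_+$ can be chosen that works simultaneously for all sequences in the subfamily. A sequence $\{\omega_n\}$ in a metric space has the universal joint repetition property if it has the joint repetition property with every sequence (in any metric space) that has the repetition property. $\mathbb{C}$ carries its usual metric. *)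

theory Defs
  imports "HOL-Analysis.Analysis"
begin

text \<open>Almost periodic: the set of translates is relatively compact in l-infinity(Z).
  l-infinity(Z) is modelled as the space of bounded (automatically continuous,
  Z being discrete) functions with the sup norm, i.e. the type bcontfun type (int to complex).
  Being a subset of l-infinity requires boundedness of a.\<close>
definition almost_periodic :: "(int \<Rightarrow> complex) \<Rightarrow> bool" where
  "almost_periodic a \<longleftrightarrow>
     bounded (range a) \<and>
     compact (closure (range (\<lambda>m::int. Bcontfun (\<lambda>n. a (n + m)))))"

definition repetition_property :: "(nat \<Rightarrow> 'a::metric_space) \<Rightarrow> bool" where
  "repetition_property w \<longleftrightarrow>
     (\<forall>\<epsilon>>0. \<forall>r::nat. r \<ge> 1 \<longrightarrow>
        (\<exists>q::nat. q \<ge> 1 \<and> (\<forall>n\<le>r * q. dist (w n) (w (n + q)) < \<epsilon>)))"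

text \<open>For a two-element family, finite subfamilies are the singletons
  (covered by the individual repetition property) and the pair itself.\<close>
definition joint_repetition_property2 ::
  "(nat \<Rightarrow> 'a::metric_space) \<Rightarrow> (nat \<Rightarrow> 'b::metric_space) \<Rightarrow> bool" where
  "joint_repetition_property2 u v \<longleftrightarrow>
     repetition_property u \<and> repetition_property v \<and>
     (\<forall>\<epsilon>>0. \<forall>r::nat. r \<ge> 1 \<longrightarrow>
        (\<exists>q::nat. q \<ge> 1 \<and>
           (\<forall>n\<le>r * q. dist (u n) (u (n + q)) < \<epsilon> \<and> dist (v n) (v (n + q)) < \<epsilon>)))"

end

theory Submission
  imports Defs
begin

lemma pigeon:
  fixes S :: "'a::metric_space set"
  assumes "compact S" "e > 0"
  shows "\<exists>K::nat. \<forall>f. (\<forall>i. f i \<in> S) \<longrightarrow> (\<exists>i j. i < j \<and> j \<le> K \<and> dist (f i) (f j) < e)"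
proof -
  have "seq_compact S" using assms(1) compact_imp_seq_compact by blast
  then obtain k where k: "finite k" "S \<subseteq> (\<Union>x\<in>k. ball x (e/2))"
    using seq_compact_imp_totally_bounded[of S] assms(2) by (meson half_gt_zero)
  show ?thesis
  proof (rule exI[of _ "card k"], intro allI impI)
    fix f :: "nat \<Rightarrow> 'a" assume f: "\<forall>i. f i \<in> S"
    have "\<forall>i. \<exists>c\<in>k. f i \<in> ball c (e/2)" using f k(2) by blast
    then obtain c where c: "\<And>i. c i \<in> k" "\<And>i. f i \<in> ball (c i) (e/2)" by metis
    have "\<not> inj_on c {0..card k}"
    proof
      assume "inj_on c {0..card k}"
      then have "card {0..card k} \<le> card k"
        using card_inj_on_le[of c "{0..card k}" k] k(1) c(1) by blast
      then show False by simp
    qed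
    then obtain i j where ij: "i \<le> card k" "j \<le> card k" "i \<noteq> j" "c i = c j"
      unfolding inj_on_def by auto
    have d: "dist (f i) (f j) < e"
    proof -
      have "dist (f i) (f j) \<le> dist (f i) (c i) + dist (c j) (f j)"
        using ij(4) dist_triangle by metis
      also have "\<dots> < e" using c(2)[of i] c(2)[of j] by (simp add: dist_commute)
      finally show ?thesis .
    qed
    show "\<exists>i j. i < j \<and> j \<le> card k \<and> dist (f i) (f j) < e"
    proof (cases "i < j")
      case True then show ?thesis using ij d by blast
    next
      case False then have "j < i" using ij(3) by simp
      then show ?thesis using ij d by (metis dist_commute)
    qed
  qed
qed

lemma chain:
  fixes w :: "nat \<Rightarrow> 'b::metric_space"
  assumes "\<forall>n\<le>R * q. dist (w n) (w (n + q)) < \<delta>"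
  shows "n + k * q \<le> R * q + q \<Longrightarrow> dist (w n) (w (n + k * q)) \<le> real k * \<delta>"
proof (induction k arbitrary: n)
  case 0 then show ?case by simp
next
  case (Suc k)
  have a: "n + k * q \<le> R * q" using Suc.prems by simp
  have "dist (w n) (w (n + Suc k * q)) \<le> dist (w n) (w (n + k * q)) + dist (w (n + k*q)) (w (n + k * q + q))"
    using dist_triangle[of "w n" "w (n + Suc k * q)" "w (n + k*q)"]
    by (simp add: algebra_simps dist_commute)
  also have "\<dots> \<le> real k * \<delta> + \<delta>"
    using Suc.IH[of n] Suc.prems assms a by (intro add_mono) (auto simp: less_imp_le)
  finally show ?case by (simp add: algebra_simps)
qed

theorem theoremA1:
  fixes a :: "int \<Rightarrow> complex" and w :: "nat \<Rightarrow> 'b::metric_space"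
  assumes "almost_periodic a"
    and "repetition_property w"
  shows "joint_repetition_property2 (\<lambda>n. a (int n)) w"
proof -
  define T where "T = (\<lambda>m::int. Bcontfun (\<lambda>n. a (n + m)))"
  have bd: "bounded (range a)" and cpt: "compact (closure (range T))"
    using assms(1) unfolding almost_periodic_def T_def by auto
  have T_app: "apply_bcontfun (T m) = (\<lambda>n. a (n + m))" for m
  proof -
    have "range (\<lambda>n. a (n + m)) \<subseteq> range a" by auto
    then have "bounded (range (\<lambda>n. a (n + m)))" using bd bounded_subset by blast
    then have "(\<lambda>n. a (n + m)) \<in> bcontfun" unfolding bcontfun_def by simp
    then show ?thesis unfolding T_def by (simp add: Bcontfun_inverse)
  qed
  have joint: "\<exists>q::nat. q \<ge> 1 \<and>
           (\<forall>n\<le>r * q. dist (a (int n)) (a (int (n + q))) < \<epsilon> \<and> dist (w n) (w (n + q)) < \<epsilon>)"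
    if e: "\<epsilon> > 0" and r: "r \<ge> 1" for \<epsilon> :: real and r :: nat
  proof -
    obtain K :: nat where K: "\<forall>f. (\<forall>i. f i \<in> closure (range T)) \<longrightarrow> (\<exists>i j. i < j \<and> j \<le> K \<and> dist (f i) (f j) < \<epsilon>)"
      using pigeon[OF cpt e] by blast
    define \<delta> where "\<delta> = \<epsilon> / (real K + 1)"
    have dpos: "\<delta> > 0" using e by (simp add: \<delta>_def)
    define R where "R = r * K + K + 1"
    obtain q where q: "q \<ge> 1" "\<forall>n\<le>R * q. dist (w n) (w (n + q)) < \<delta>"
      using assms(2) dpos unfolding repetition_property_def R_def by fastforce
    have allin: "\<forall>i. T (int (i*q)) \<in> closure (range T)"
      using closure_subset[of "range T"] by (meson rangeI subsetD)
    from mp[OF spec[OF K, of "\<lambda>i. T (int (i*q))"] allin]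
    obtain i j where ij: "i < j" "j \<le> K" "dist (T (int (i*q))) (T (int (j*q))) < \<epsilon>"
      by blast
    define Q where "Q = (j - i) * q"
    have Q1: "Q \<ge> 1" using ij q by (simp add: Q_def)
    show ?thesis
    proof (intro exI conjI allI impI)
      show "1 \<le> Q" by (rule Q1)
      fix n assume n: "n \<le> r * Q"
      let ?x = "int n - int (i*q)"
      have "dist (apply_bcontfun (T (int (i*q))) ?x) (apply_bcontfun (T (int (j*q))) ?x) < \<epsilon>"
        using dist_bounded ij(3) le_less_trans by blast
      moreover have "?x + int (j*q) = int (n + Q)"
      proof -
        have iq: "i*q \<le> j*q" using ij(1) by simp
        have "int Q = int (j*q) - int (i*q)"
          unfolding Q_def using iq by (simp add: diff_mult_distrib of_nat_diff)
        then show ?thesis by simp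
      qed
      ultimately show "dist (a (int n)) (a (int (n + Q))) < \<epsilon>"
        by (simp add: T_app) (smt (verit))
      have kK: "j - i \<le> K" using ij by simp
      have "r * Q \<le> r * (K * q)" unfolding Q_def using kK by (simp add: mult_le_mono)
      then have h1: "n \<le> r * (K * q)" using n by linarith
      have h2: "(j - i) * q \<le> K * q" using mult_le_mono1[OF kK, of q] .
      have h3: "R * q + q = r * (K * q) + K * q + q + q" by (simp add: R_def algebra_simps)
      have "n + (j - i) * q \<le> R * q + q" using h1 h2 h3 by linarith
      then have "dist (w n) (w (n + Q)) \<le> real (j - i) * \<delta>"
        using chain[OF q(2)] unfolding Q_def by blast
      also have "\<dots> \<le> real K * \<delta>" using kK dpos by (simp add: mult_right_mono)
      also have "\<dots> < \<epsilon>" using e by (simp add: \<delta>_def field_simps)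
      finally show "dist (w n) (w (n + Q)) < \<epsilon>" .
    qed
  qed
  show ?thesis unfolding joint_repetition_property2_def repetition_property_def
  proof (intro conjI)
    show "\<forall>\<epsilon>>0. \<forall>r\<ge>1. \<exists>q\<ge>1. \<forall>n\<le>r * q. dist (a (int n)) (a (int (n + q))) < \<epsilon>"
      using joint by blast
    show "\<forall>\<epsilon>>0. \<forall>r\<ge>1. \<exists>q\<ge>1. \<forall>n\<le>r * q. dist (w n) (w (n + q)) < \<epsilon>"
      using assms(2) unfolding repetition_property_def by blast
    show "\<forall>\<epsilon>>0. \<forall>r\<ge>1. \<exists>q\<ge>1. \<forall>n\<le>r * q. dist (a (int n)) (a (int (n + q))) < \<epsilon> \<and> dist (w n) (w (n + q)) < \<epsilon>"
      using joint by blast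
  qed
qed

end
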